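(* Consider Algorithm 3 (described in the context) under the Standing Assumption, Matrix Assumption and Gradient Assumption of the context. For all $k\in\mathbb{N}$, $\mathbb{E}_k[\bar d_k]=d_k$, $\mathbb{E}_k[\bar u_k]=u_k$, and $\mathbb{E}_k[\bar y_k]=y_k$. Moreover, there exists $\kappa_d>0$, independent of $k$ and of the run of the algorithm, such that $\mathbb{E}_k[\|\bar d_k-d_k\|_2]\le\kappa_d\sqrt M$ for all $k$.
   Context: Problem: $\min_x f(x)$ s.t. $c(x)=0$, $f(x)=\mathbb{E}[F(x,\omega)]$, $c:\mathbb{R}^n\to\mathbb{R}^m$ deterministic. Notation: $g_k=\nabla f(x_k)$, $c_k=c(x_k)$, $J_k=\nabla c(x_k)^T$; $\Delta q(x,\tau,g,H,d)=-\tau(g^Td+\frac12\max\{d^THd,0\})+\|c(x)\|_1$. Standing Assumption: an open convex set $\mathcal X$ contains all iterates; $f$ is $C^1$, bounded below on $\mathcal X$, $\nabla f$ bounded and $L$-Lipschitz on $\mathcal X$; $c$, $\nabla c^T$ bounded on $\mathcal X$; $\nabla c_i$ is $\gamma_i$-Lipschitz on $\mathcal X$; singular values of $\nabla c(x)^T$ bounded away from zero uniformly over $\mathcal X$; $\Gamma:=\sum_i\gamma_i$. Matrix Assumption: deterministic symmetric $H_k$, chosen independently of the stochastic gradients, with $\|H_k\|_2\le\kappa_H$ and $u^TH_ku\ge\zeta\|u\|_2^2$ whenever $J_ku=0$. Algorithm 3 (inputs $x_0$, $\bar\tau_{-1}>0$, $\epsilon,\sigma\in(0,1)$, $\bar\xi_{-1}>0$,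 $\{\beta_k\}\subset(0,1]$, $\theta\ge0$): at iteration $k$, obtain stochastic gradient $\bar g_k$; $(\bar d_k,\bar y_k)$ solves $H_k\bar d_k+J_k^T\bar y_k=-\bar g_k$, $J_k\bar d_k=-c_k$ (assumed $\bar d_k\neq0$). $\bar\tau_k^{trial}=\infty$ if $\bar g_k^T\bar d_k+\max\{\bar d_k^TH_k\bar d_k,0\}\le0$, else $\frac{(1-\sigma)\|c_k\|_1}{\bar g_k^T\bar d_k+\max\{\bar d_k^TH_k\bar d_k,0\}}$; $\bar\tau_k=\bar\tau_{k-1}$ if $\bar\tau_{k-1}\le\bar\tau_k^{trial}$, else $(1-\epsilon)\bar\tau_k^{trial}$. $\bar\xi_k^{trial}=\frac{\Delta q(x_k,\bar\tau_k,\bar g_k,H_k,\bar d_k)}{\bar\tau_k\|\bar d_k\|_2^2}$; $\bar\xi_k=\bar\xi_{k-1}$ if $\bar\xi_{k-1}\le\bar\xi_k^{trial}$, else $(1-\epsilon)\bar\xi_k^{trial}$. With $D_k=(\bar\tau_kL+\Gamma)\|\bar d_k\|_2^2$, $\hat a_k=\beta_k\Delta q(x_k,\bar\tau_k,\bar g_k,H_k,\bar d_k)/D_k$, $\tilde a_k=\hat a_k-4\|c_k\|_1/D_k$, project both onto $[a_k,a_k+\theta\beta_k^2]$ with $a_k=\frac{\beta_k\bar\xi_k\bar\tau_k}{\bar\tau_kL+\Gamma}$ to get $\widehat\alpha_k,\widetilde\alpha_k$; $\bar\alpha_k=\widehat\alpha_k$ if $\widehat\alpha_k<1$, $1$ if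 $\widetilde\alpha_k\le1\le\widehat\alpha_k$, $\widetilde\alpha_k$ if $\widetilde\alpha_k>1$; $x_{k+1}=x_k+\bar\alpha_k\bar d_k$. Gradient Assumption: $\mathbb{E}_k[\bar g_k]=g_k$ and $\mathbb{E}_k[\|\bar g_k-g_k\|_2^2]\le M$, where $\mathbb{E}_k$ is expectation w.r.t. $\omega$ conditioned on the algorithm having reached $x_k$ at iteration $k$. Deterministic counterpart: $(d_k,y_k)$ solves $H_kd_k+J_k^Ty_k=-g_k$, $J_kd_k=-c_k$. Decompositions: $\bar d_k=\bar u_k+v_k$, $d_k=u_k+v_k$ with $\bar u_k,u_k\in\mathrm{Null}(J_k)$, $v_k\in\mathrm{Range}(J_k^T)$. *)

theory Defs
  imports "HOL-Probability.Probability"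
begin

text \<open>Norms on real^'n are Euclidean.
  "Singular values of J(x) bounded away from zero uniformly" is rendered as:
  the smallest singular value of the (full row rank) m x n matrix J(x) is at least
  some sigma > 0, i.e. norm (J(x)^T z) >= sigma * norm z for all z.\<close>
definition standing_assumption ::
  "(real^'n) set \<Rightarrow> (real^'n \<Rightarrow> real) \<Rightarrow> (real^'n \<Rightarrow> real^'n)
   \<Rightarrow> (real^'n \<Rightarrow> real^'m) \<Rightarrow> (real^'n \<Rightarrow> real^'n^'m) \<Rightarrow> real \<Rightarrow> ('m \<Rightarrow> real) \<Rightarrow> bool" where
  "standing_assumption X f gradf c J L \<gamma> \<longleftrightarrow>
     open X \<and> convex X \<and>
     (\<forall>x\<in>X. (f has_derivative (\<lambda>h. gradf x \<bullet> h)) (at x)) \<and>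
     continuous_on X gradf \<and>
     bdd_below (f ` X) \<and>
     bounded (gradf ` X) \<and>
     (\<forall>x\<in>X. \<forall>x'\<in>X. norm (gradf x - gradf x') \<le> L * norm (x - x')) \<and>
     bounded (c ` X) \<and>
     (\<forall>x\<in>X. (c has_derivative (\<lambda>h. J x *v h)) (at x)) \<and>
     bounded (J ` X) \<and>
     (\<forall>i. \<forall>x\<in>X. \<forall>x'\<in>X. norm (J x $ i - J x' $ i) \<le> \<gamma> i * norm (x - x')) \<and>
     (\<exists>\<sigma>>0. \<forall>x\<in>X. \<forall>z. \<sigma> * norm z \<le> norm (transpose (J x) *v z))"

definition matrix_assumption ::
  "real^'n^'n \<Rightarrow> real^'n^'m \<Rightarrow> real \<Rightarrow> real \<Rightarrow> bool" where
  "matrix_assumption H Jk \<kappa>H \<zeta> \<longleftrightarrow>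
     transpose H = H \<and>
     onorm (\<lambda>v. H *v v) \<le> \<kappa>H \<and>
     (\<forall>u. Jk *v u = 0 \<longrightarrow> \<zeta> * (norm u)\<^sup>2 \<le> u \<bullet> (H *v u))"

text \<open>Gradient Assumption at iteration k: P is the (conditional, given x_k) law of omega,
  gbar the stochastic gradient, g = gradf x_k the true gradient, Mv the variance bound M.\<close>
definition gradient_assumption ::
  "'w measure \<Rightarrow> ('w \<Rightarrow> real^'n) \<Rightarrow> real^'n \<Rightarrow> real \<Rightarrow> bool" where
  "gradient_assumption P gbar g Mv \<longleftrightarrow>
     0 \<le> Mv \<and>
     integrable P gbar \<and> (\<integral>\<omega>. gbar \<omega> \<partial>P) = g \<and>
     (\<integral>\<^sup>+\<omega>. ennreal ((norm (gbar \<omega> - g))\<^sup>2) \<partial>P) \<le> ennreal Mv"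

end

theory Submission
  imports Defs
begin

lemma tr_inner: fixes J :: "real^'n^'m" shows "inner u (transpose J *v y) = inner (J *v u) y"
  by (metis dot_lmul_matrix vector_transpose_matrix)

lemma kkt_inv:
  fixes H :: "real^'n^'n" and J :: "real^'n^'m"
  assumes Hpos: "\<forall>u. J *v u = 0 \<longrightarrow> \<zeta> * (norm u)\<^sup>2 \<le> u \<bullet> (H *v u)" and zp: "\<zeta> > 0"
    and sig: "\<sigma> > 0" "\<forall>z. \<sigma> * norm z \<le> norm (transpose J *v z)"
  shows "\<exists>G. linear G \<and> (\<forall>p. G (H *v fst p + transpose J *v snd p, J *v fst p) = p)"
proof -
  define K where "K = (\<lambda>p::(real^'n) \<times> (real^'m). (H *v fst p + transpose J *v snd p, J *v fst p))"
  have lin: "linear K"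
    unfolding K_def by (rule linearI) (auto simp: matrix_vector_right_distrib matrix_vector_mult_scaleR scaleR_right_distrib)
  have inj: "inj K"
  proof (rule linear_injective_0[THEN iffD2, OF lin], intro allI impI)
    fix p :: "(real^'n) \<times> (real^'m)"
    obtain a b where p: "p = (a, b)" by fastforce
    assume "K p = 0"
    hence e1: "H *v a + transpose J *v b = 0" and e2: "J *v a = 0"
      by (auto simp: K_def p zero_prod_def)
    have Ha: "H *v a = - (transpose J *v b)" using e1 by (simp add: eq_neg_iff_add_eq_0)
    have "a \<bullet> (H *v a) = - (a \<bullet> (transpose J *v b))" by (simp only: Ha inner_minus_right)
    also have "\<dots> = 0" by (simp only: tr_inner e2 inner_zero_left neg_0_equal_iff_equal)
    finally have "a \<bullet> (H *v a) = 0" .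
    hence "\<zeta> * (norm a)\<^sup>2 \<le> 0" using Hpos e2 by auto
    hence "(norm a)\<^sup>2 \<le> 0" using zp by (simp add: mult_le_0_iff)
    hence a0: "a = 0" by simp
    hence "transpose J *v b = 0" using e1 by simp
    hence "\<sigma> * norm b \<le> 0" using sig(2)[rule_format, of b] by simp
    hence "b = 0" using sig(1) by (simp add: mult_le_0_iff)
    with a0 show "p = 0" by (simp add: p zero_prod_def)
  qed
  obtain G where "linear G" "G \<circ> K = id" using linear_injective_left_inverse[OF lin inj] by blast
  hence "\<forall>p. G (K p) = p" by (simp add: fun_eq_iff)
  thus ?thesis using \<open>linear G\<close> unfolding K_def by blast
qed

theorem lemma3p7:
  fixes X :: "(real^'n) set" and f :: "real^'n \<Rightarrow> real" and gradf :: "real^'n \<Rightarrow> real^'n"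
    and c :: "real^'n \<Rightarrow> real^'m" and J :: "real^'n \<Rightarrow> real^'n^'m"
    and L :: real and \<gamma> :: "'m \<Rightarrow> real" and \<kappa>H \<zeta> :: real
  assumes SA: "standing_assumption X f gradf c J L \<gamma>"
    and zeta_pos: "0 < \<zeta>"
  shows "\<exists>\<kappa>d>0. \<forall>(Mv::real) (x::real^'n) (H::real^'n^'n) (P::'w measure)
            (gbar::'w \<Rightarrow> real^'n) (dbar::'w \<Rightarrow> real^'n) (ybar::'w \<Rightarrow> real^'m) (ubar::'w \<Rightarrow> real^'n)
            (d::real^'n) (y::real^'m) (u::real^'n) (v::real^'n).
     prob_space P \<and> x \<in> X \<and>
     matrix_assumption H (J x) \<kappa>H \<zeta> \<and>
     gradient_assumption P gbar (gradf x) Mv \<and>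
     (\<forall>\<omega>\<in>space P. H *v dbar \<omega> + transpose (J x) *v ybar \<omega> = - gbar \<omega> \<and>
                   J x *v dbar \<omega> = - c x \<and> dbar \<omega> \<noteq> 0) \<and>
     H *v d + transpose (J x) *v y = - gradf x \<and> J x *v d = - c x \<and>
     v \<in> range (\<lambda>z. transpose (J x) *v z) \<and>
     (\<forall>\<omega>\<in>space P. dbar \<omega> = ubar \<omega> + v \<and> J x *v ubar \<omega> = 0) \<and>
     d = u + v \<and> J x *v u = 0
     \<longrightarrow>
     (integrable P dbar \<and> (\<integral>\<omega>. dbar \<omega> \<partial>P) = d) \<and>
     (integrable P ubar \<and> (\<integral>\<omega>. ubar \<omega> \<partial>P) = u) \<and>
     (integrable P ybar \<and> (\<integral>\<omega>. ybar \<omega> \<partial>P) = y) \<and>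
     integrable P (\<lambda>\<omega>. norm (dbar \<omega> - d)) \<and>
     (\<integral>\<omega>. norm (dbar \<omega> - d) \<partial>P) \<le> \<kappa>d * sqrt Mv"
proof (rule exI[of _ "1/\<zeta>"], rule conjI, simp add: zeta_pos, intro allI impI)
  fix Mv x H and P :: "'w measure" and gbar dbar ybar ubar d y u v
  assume A: "prob_space P \<and> x \<in> X \<and>
     matrix_assumption H (J x) \<kappa>H \<zeta> \<and>
     gradient_assumption P gbar (gradf x) Mv \<and>
     (\<forall>\<omega>\<in>space P. H *v dbar \<omega> + transpose (J x) *v ybar \<omega> = - gbar \<omega> \<and>
                   J x *v dbar \<omega> = - c x \<and> dbar \<omega> \<noteq> 0) \<and>
     H *v d + transpose (J x) *v y = - gradf x \<and> J x *v d = - c x \<and>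
     v \<in> range (\<lambda>z. transpose (J x) *v z) \<and>
     (\<forall>\<omega>\<in>space P. dbar \<omega> = ubar \<omega> + v \<and> J x *v ubar \<omega> = 0) \<and>
     d = u + v \<and> J x *v u = 0"
  interpret prob_space P using A by blast
  define g where "g = gradf x"
  have xX: "x \<in> X" using A by blast
  have MA: "matrix_assumption H (J x) \<kappa>H \<zeta>" using A by blast
  have GA: "gradient_assumption P gbar g Mv" using A g_def by blast
  have sysb: "\<And>\<omega>. \<omega> \<in> space P \<Longrightarrow> H *v dbar \<omega> + transpose (J x) *v ybar \<omega> = - gbar \<omega> \<and> J x *v dbar \<omega> = - c x"
    using A by blast
  have sys: "H *v d + transpose (J x) *v y = - g" "J x *v d = - c x" using A g_def by auto
  have ub: "\<And>\<omega>. \<omega> \<in> space P \<Longrightarrow> ubar \<omega> = dbar \<omega> - v" using A by auto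
  have duv: "u = d - v" using A by auto
  obtain \<sigma> where sig: "\<sigma> > 0" "\<forall>z. \<sigma> * norm z \<le> norm (transpose (J x) *v z)"
    using SA xX unfolding standing_assumption_def by blast
  have Hpos: "\<forall>u. J x *v u = 0 \<longrightarrow> \<zeta> * (norm u)\<^sup>2 \<le> u \<bullet> (H *v u)"
    using MA unfolding matrix_assumption_def by blast
  obtain G where G: "linear G" "\<And>p. G (H *v fst p + transpose (J x) *v snd p, J x *v fst p) = p"
    using kkt_inv[OF Hpos zeta_pos sig] by blast
  have gint: "integrable P gbar" and gexp: "(\<integral>\<omega>. gbar \<omega> \<partial>P) = g" and M0: "0 \<le> Mv"
    and gvar: "(\<integral>\<^sup>+\<omega>. ennreal ((norm (gbar \<omega> - g))\<^sup>2) \<partial>P) \<le> ennreal Mv"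
    using GA unfolding gradient_assumption_def by auto
  define Ld where "Ld = (\<lambda>e. fst (G (- e, 0)))"
  define Ly where "Ly = (\<lambda>e. snd (G (- e, 0)))"
  define d0 where "d0 = fst (G (0, - c x))"
  define y0 where "y0 = snd (G (0, - c x))"
  have Gsplit: "\<And>e. G (- e, - c x) = G (- e, 0) + G (0, - c x)"
  proof -
    fix e :: "real^'n"
    have "(- e, - c x) = (- e, 0) + (0, - c x)" by simp
    thus "G (- e, - c x) = G (- e, 0) + G (0, - c x)" using linear_add[OF G(1)] by metis
  qed
  have solve: "\<And>a b e. H *v a + transpose (J x) *v b = - e \<Longrightarrow> J x *v a = - c x \<Longrightarrow> a = Ld e + d0 \<and> b = Ly e + y0"
  proof -
    fix a b e assume "H *v a + transpose (J x) *v b = - e" "J x *v a = - c x"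
    hence "G (- e, - c x) = (a, b)" using G(2)[of "(a,b)"] by simp
    thus "a = Ld e + d0 \<and> b = Ly e + y0" using Gsplit[of e]
      by (metis Ld_def Ly_def d0_def y0_def fst_add snd_add prod.sel)
  qed
  have db: "\<And>\<omega>. \<omega> \<in> space P \<Longrightarrow> dbar \<omega> = Ld (gbar \<omega>) + d0" and yb: "\<And>\<omega>. \<omega> \<in> space P \<Longrightarrow> ybar \<omega> = Ly (gbar \<omega>) + y0"
    using solve sysb by blast+
  have dd: "d = Ld g + d0" and yy: "y = Ly g + y0" using solve sys by blast+
  have Gadd: "\<And>a b. G (- (a + b), 0) = G (- a, 0) + G (- b, 0)"
  proof -
    fix a b :: "real^'n"
    have "(- (a + b), 0::real^'m) = (- a, 0) + (- b, 0)" by simp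
    thus "G (- (a + b), 0) = G (- a, 0) + G (- b, 0)" using linear_add[OF G(1)] by metis
  qed
  have Gsc: "\<And>r a. G (- (r *\<^sub>R a), 0) = r *\<^sub>R G (- a, 0)"
  proof -
    fix r and a :: "real^'n"
    have "(- (r *\<^sub>R a), 0::real^'m) = r *\<^sub>R (- a, 0)" by simp
    thus "G (- (r *\<^sub>R a), 0) = r *\<^sub>R G (- a, 0)" using linear_scale[OF G(1)] by metis
  qed
  have blLd: "bounded_linear Ld" unfolding Ld_def
    by (rule linear_conv_bounded_linear[THEN iffD1], rule linearI) (simp_all only: Gadd Gsc fst_add fst_scaleR)
  have blLy: "bounded_linear Ly" unfolding Ly_def
    by (rule linear_conv_bounded_linear[THEN iffD1], rule linearI) (simp_all only: Gadd Gsc snd_add snd_scaleR)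
  have i1: "integrable P (\<lambda>\<omega>. Ld (gbar \<omega>) + d0)"
    by (intro Bochner_Integration.integrable_add integrable_bounded_linear[OF blLd gint]) auto
  have i2: "integrable P (\<lambda>\<omega>. Ly (gbar \<omega>) + y0)"
    by (intro Bochner_Integration.integrable_add integrable_bounded_linear[OF blLy gint]) auto
  have "integrable P dbar \<longleftrightarrow> integrable P (\<lambda>\<omega>. Ld (gbar \<omega>) + d0)" by (rule Bochner_Integration.integrable_cong) (auto simp: db)
  hence intd: "integrable P dbar" using i1 by simp
  have Ed: "(\<integral>\<omega>. dbar \<omega> \<partial>P) = d"
  proof -
    have "(\<integral>\<omega>. dbar \<omega> \<partial>P) = (\<integral>\<omega>. Ld (gbar \<omega>) + d0 \<partial>P)" by (rule Bochner_Integration.integral_cong) (auto simp: db)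
    also have "\<dots> = (\<integral>\<omega>. Ld (gbar \<omega>) \<partial>P) + d0"
      by (subst Bochner_Integration.integral_add) (auto simp: prob_space intro: integrable_bounded_linear[OF blLd gint])
    also have "\<dots> = d" using integral_bounded_linear[OF blLd gint] gexp dd by simp
    finally show ?thesis .
  qed
  have "integrable P ybar \<longleftrightarrow> integrable P (\<lambda>\<omega>. Ly (gbar \<omega>) + y0)" by (rule Bochner_Integration.integrable_cong) (auto simp: yb)
  hence inty: "integrable P ybar" using i2 by simp
  have Ey: "(\<integral>\<omega>. ybar \<omega> \<partial>P) = y"
  proof -
    have "(\<integral>\<omega>. ybar \<omega> \<partial>P) = (\<integral>\<omega>. Ly (gbar \<omega>) + y0 \<partial>P)" by (rule Bochner_Integration.integral_cong) (auto simp: yb)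
    also have "\<dots> = (\<integral>\<omega>. Ly (gbar \<omega>) \<partial>P) + y0"
      by (subst Bochner_Integration.integral_add) (auto simp: prob_space intro: integrable_bounded_linear[OF blLy gint])
    also have "\<dots> = y" using integral_bounded_linear[OF blLy gint] gexp yy by simp
    finally show ?thesis .
  qed
  have i3: "integrable P (\<lambda>\<omega>. dbar \<omega> - v)" using intd by auto
  have "integrable P ubar \<longleftrightarrow> integrable P (\<lambda>\<omega>. dbar \<omega> - v)" by (rule Bochner_Integration.integrable_cong) (auto simp: ub)
  hence intu: "integrable P ubar" using i3 by simp
  have Eu: "(\<integral>\<omega>. ubar \<omega> \<partial>P) = u"
  proof -
    have "(\<integral>\<omega>. ubar \<omega> \<partial>P) = (\<integral>\<omega>. dbar \<omega> - v \<partial>P)" by (rule Bochner_Integration.integral_cong) (auto simp: ub)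
    also have "\<dots> = d - v" using intd Ed by (subst Bochner_Integration.integral_diff) (auto simp: prob_space)
    finally show ?thesis using duv by simp
  qed
  have intn: "integrable P (\<lambda>\<omega>. norm (dbar \<omega> - d))" using intd by auto
  have pw: "\<And>\<omega>. \<omega> \<in> space P \<Longrightarrow> norm (dbar \<omega> - d) \<le> norm (gbar \<omega> - g) / \<zeta>"
  proof -
    fix \<omega> assume w: "\<omega> \<in> space P"
    define \<delta> where "\<delta> = dbar \<omega> - d"
    define \<eta> where "\<eta> = ybar \<omega> - y"
    define e where "e = gbar \<omega> - g"
    have s1: "H *v \<delta> + transpose (J x) *v \<eta> = - e" using sysb[OF w] sys
      by (simp add: \<delta>_def \<eta>_def e_def matrix_vector_mult_diff_distrib algebra_simps)
    have s2: "J x *v \<delta> = 0" using sysb[OF w] sys by (simp add: \<delta>_def matrix_vector_mult_diff_distrib)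
    have Hd: "H *v \<delta> = - e - transpose (J x) *v \<eta>" using s1 by (simp only: eq_diff_eq)
    have "\<delta> \<bullet> (H *v \<delta>) = - (\<delta> \<bullet> e) - \<delta> \<bullet> (transpose (J x) *v \<eta>)"
      by (simp only: Hd inner_diff_right inner_minus_right)
    also have "\<dots> = - (\<delta> \<bullet> e)" by (simp only: tr_inner s2 inner_zero_left diff_zero)
    also have "\<dots> \<le> norm \<delta> * norm e" using norm_cauchy_schwarz[of "- \<delta>" e] by simp
    finally have "\<zeta> * (norm \<delta>)\<^sup>2 \<le> norm \<delta> * norm e" using Hpos s2 by (meson order_trans)
    hence "\<zeta> * norm \<delta> \<le> norm e"
      by (cases "norm \<delta> = 0") (auto simp: power2_eq_square mult.assoc mult.left_commute[of \<zeta>])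
    thus "norm (dbar \<omega> - d) \<le> norm (gbar \<omega> - g) / \<zeta>" using zeta_pos
      by (simp add: \<delta>_def e_def field_simps)
  qed
  define ee where "ee = (\<lambda>\<omega>. norm (gbar \<omega> - g))"
  have mee: "ee \<in> borel_measurable P" unfolding ee_def using gint by measurable
  have iee: "integrable P ee" unfolding ee_def using gint by auto
  have iee2: "integrable P (\<lambda>\<omega>. (ee \<omega>)\<^sup>2)"
  proof (rule integrableI_bounded)
    show "(\<lambda>\<omega>. (ee \<omega>)\<^sup>2) \<in> borel_measurable P" using mee by measurable
    show "(\<integral>\<^sup>+\<omega>. ennreal (norm ((ee \<omega>)\<^sup>2)) \<partial>P) < \<infinity>" using gvar
      by (simp add: ee_def) (metis ennreal_less_top le_less_trans)
  qed
  have Eee2: "(\<integral>\<omega>. (ee \<omega>)\<^sup>2 \<partial>P) \<le> Mv"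
  proof -
    have "ennreal (\<integral>\<omega>. (ee \<omega>)\<^sup>2 \<partial>P) = (\<integral>\<^sup>+\<omega>. ennreal ((ee \<omega>)\<^sup>2) \<partial>P)"
      by (rule nn_integral_eq_integral[OF iee2, symmetric]) auto
    also have "\<dots> \<le> ennreal Mv" using gvar by (simp add: ee_def)
    finally show ?thesis using M0 by (simp add: ennreal_le_iff)
  qed
  have jen: "(\<integral>\<omega>. ee \<omega> \<partial>P)\<^sup>2 \<le> (\<integral>\<omega>. (ee \<omega>)\<^sup>2 \<partial>P)"
    using jensens_inequality[where I=UNIV and q=power2 and X=ee, OF iee _ _ iee2 convex_power2] by auto
  have Eee: "(\<integral>\<omega>. ee \<omega> \<partial>P) \<le> sqrt Mv"
    using jen Eee2 by (meson order_trans real_le_rsqrt)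
  have "(\<integral>\<omega>. norm (dbar \<omega> - d) \<partial>P) \<le> (\<integral>\<omega>. ee \<omega> / \<zeta> \<partial>P)"
    using intn Bochner_Integration.integrable_divide[OF iee, of \<zeta>] by (intro integral_mono) (auto simp: pw ee_def)
  also have "\<dots> = (\<integral>\<omega>. ee \<omega> \<partial>P) / \<zeta>" by simp
  also have "\<dots> \<le> 1 / \<zeta> * sqrt Mv" using Eee zeta_pos by (simp add: divide_right_mono)
  finally have bnd: "(\<integral>\<omega>. norm (dbar \<omega> - d) \<partial>P) \<le> 1 / \<zeta> * sqrt Mv" .
  show "(integrable P dbar \<and> (\<integral>\<omega>. dbar \<omega> \<partial>P) = d) \<and>
     (integrable P ubar \<and> (\<integral>\<omega>. ubar \<omega> \<partial>P) = u) \<and>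
     (integrable P ybar \<and> (\<integral>\<omega>. ybar \<omega> \<partial>P) = y) \<and>
     integrable P (\<lambda>\<omega>. norm (dbar \<omega> - d)) \<and>
     (\<integral>\<omega>. norm (dbar \<omega> - d) \<partial>P) \<le> 1 / \<zeta> * sqrt Mv"
    using intd Ed intu Eu inty Ey intn bnd by blast
qed

end
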